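(* For any algebra $(A,\to,1)$ of type $(2,0)$, it satisfies (Re), (Ex) and (An) if and only if it satisfies (Re), (M), (Ex) and (An).
   Context: Properties, required for all $x,y,z\in A$: (Re) $x\to x=1$; (M) $1\to x=x$; (Ex) $x\to(y\to z)=y\to(x\to z)$; (An) $x\to y=1$ and $y\to x=1$ imply $x=y$. *)

theory Defs
  imports Main
begin

definition prop_Re :: "('a \<Rightarrow> 'a \<Rightarrow> 'a) \<Rightarrow> 'a \<Rightarrow> bool" where
  "prop_Re imp one \<longleftrightarrow> (\<forall>x. imp x x = one)"

definition prop_M :: "('a \<Rightarrow> 'a \<Rightarrow> 'a) \<Rightarrow> 'a \<Rightarrow> bool" where
  "prop_M imp one \<longleftrightarrow> (\<forall>x. imp one x = x)"

definition prop_Ex :: "('a \<Rightarrow> 'a \<Rightarrow> 'a) \<Rightarrow> bool" where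
  "prop_Ex imp \<longleftrightarrow> (\<forall>x y z. imp x (imp y z) = imp y (imp x z))"

definition prop_An :: "('a \<Rightarrow> 'a \<Rightarrow> 'a) \<Rightarrow> 'a \<Rightarrow> bool" where
  "prop_An imp one \<longleftrightarrow> (\<forall>x y. imp x y = one \<and> imp y x = one \<longrightarrow> x = y)"

end

theory Submission
  imports Defs
begin

theorem corollary4p2:
  fixes imp :: "'a \<Rightarrow> 'a \<Rightarrow> 'a" and one :: 'a
  shows "(prop_Re imp one \<and> prop_Ex imp \<and> prop_An imp one) \<longleftrightarrow>
         (prop_Re imp one \<and> prop_M imp one \<and> prop_Ex imp \<and> prop_An imp one)"
proof (intro iffI)
  assume "prop_Re imp one \<and> prop_Ex imp \<and> prop_An imp one"
  then have Re: "\<And>x. imp x x = one" and Ex: "\<And>x y z. imp x (imp y z) = imp y (imp x z)"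
    and An: "\<And>x y. imp x y = one \<Longrightarrow> imp y x = one \<Longrightarrow> x = y"
    unfolding prop_Re_def prop_Ex_def prop_An_def by blast+
  have one1: "\<And>y. imp one y = one \<Longrightarrow> y = one"
  proof -
    fix y assume h: "imp one y = one"
    have "imp y (imp one y) = imp one (imp y y)" by (rule Ex)
    then have "imp y one = one" using h Re by simp
    then show "y = one" using An h by blast
  qed
  have M: "\<And>x. imp one x = x"
  proof -
    fix x
    have a: "imp x (imp one x) = one" using Ex[of x one x] Re by simp
    have "imp one (imp (imp one x) x) = imp (imp one x) (imp one x)" by (rule Ex)
    then have "imp one (imp (imp one x) x) = one" using Re by simp
    then have "imp (imp one x) x = one" by (rule one1)
    then show "imp one x = x" using An a by blast
  qed
  then show "prop_Re imp one \<and> prop_M imp one \<and> prop_Ex imp \<and> prop_An imp one"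
    using \<open>prop_Re imp one \<and> prop_Ex imp \<and> prop_An imp one\<close> unfolding prop_M_def by blast
qed blast

end
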